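(* Let $\mathbb{C}$ be a regular category, $n$ a positive integer, and for each $i\in\{1,\dots,n\}$ let $\alpha_i':Q_i\to A$ and $\beta_i':Q_i\to B$ be regular epimorphisms and $a_i:A\to C_i$, $b_i:B\to C_i$ morphisms with $b_i\beta_i'=a_i\alpha_i'$. Then there exist an object $Q$, a regular epimorphism $\alpha:Q\to A$ and regular epimorphisms $\beta_i:Q\to B$ ($i=1,\dots,n$) such that $b_i\beta_i=a_i\alpha$ for every $i\in\{1,\dots,n\}$.
   Context: A category is regular if it has finite limits and coequalizers of kernel pairs and regular epimorphisms are stable under pullback. *)

theory Defs
  imports Main
begin

text \<open>A (locally small, set-based) category: objects of type 'o, arrows of type 'a.
  comp g f denotes the composite "g after f" (defined when cod f = dom g).\<close>

record ('o, 'a) category =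
  Ob :: "'o set"
  Ar :: "'a set"
  dom :: "'a \<Rightarrow> 'o"
  cod :: "'a \<Rightarrow> 'o"
  ident :: "'o \<Rightarrow> 'a"
  comp :: "'a \<Rightarrow> 'a \<Rightarrow> 'a"

definition hom :: "('o, 'a) category \<Rightarrow> 'o \<Rightarrow> 'o \<Rightarrow> 'a set" where
  "hom C x y = {f \<in> Ar C. dom C f = x \<and> cod C f = y}"

definition is_category :: "('o, 'a) category \<Rightarrow> bool" where
  "is_category C \<longleftrightarrow>
     (\<forall>f \<in> Ar C. dom C f \<in> Ob C \<and> cod C f \<in> Ob C) \<and>
     (\<forall>x \<in> Ob C. ident C x \<in> hom C x x) \<and>
     (\<forall>x \<in> Ob C. \<forall>y \<in> Ob C. \<forall>z \<in> Ob C. \<forall>f \<in> hom C x y. \<forall>g \<in> hom C y z.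
        comp C g f \<in> hom C x z) \<and>
     (\<forall>f \<in> Ar C. comp C (ident C (cod C f)) f = f \<and> comp C f (ident C (dom C f)) = f) \<and>
     (\<forall>f \<in> Ar C. \<forall>g \<in> Ar C. \<forall>h \<in> Ar C. cod C f = dom C g \<longrightarrow> cod C g = dom C h \<longrightarrow>
        comp C h (comp C g f) = comp C (comp C h g) f)"

text \<open>A finite diagram is given by a finite graph (vertex set V, edge set E of naturals,
  source s, target t) and an assignment of objects D to vertices and arrows F to edges.
  (Limits over a finite category J are the same as limits over its underlying finite graph.)\<close>

definition is_finite_diagram :: "('o, 'a) category \<Rightarrow> nat set \<Rightarrow> nat set \<Rightarrow>
    (nat \<Rightarrow> nat) \<Rightarrow> (nat \<Rightarrow> nat) \<Rightarrow> (nat \<Rightarrow> 'o) \<Rightarrow> (nat \<Rightarrow> 'a) \<Rightarrow> bool" where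
  "is_finite_diagram C V E s t D F \<longleftrightarrow> finite V \<and> finite E \<and>
     (\<forall>e \<in> E. s e \<in> V \<and> t e \<in> V) \<and> (\<forall>v \<in> V. D v \<in> Ob C) \<and>
     (\<forall>e \<in> E. F e \<in> hom C (D (s e)) (D (t e)))"

definition is_cone :: "('o, 'a) category \<Rightarrow> nat set \<Rightarrow> nat set \<Rightarrow>
    (nat \<Rightarrow> nat) \<Rightarrow> (nat \<Rightarrow> nat) \<Rightarrow> (nat \<Rightarrow> 'o) \<Rightarrow> (nat \<Rightarrow> 'a) \<Rightarrow> 'o \<Rightarrow> (nat \<Rightarrow> 'a) \<Rightarrow> bool" where
  "is_cone C V E s t D F L lam \<longleftrightarrow> L \<in> Ob C \<and> (\<forall>v \<in> V. lam v \<in> hom C L (D v)) \<and>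
     (\<forall>e \<in> E. comp C (F e) (lam (s e)) = lam (t e))"

definition is_limit :: "('o, 'a) category \<Rightarrow> nat set \<Rightarrow> nat set \<Rightarrow>
    (nat \<Rightarrow> nat) \<Rightarrow> (nat \<Rightarrow> nat) \<Rightarrow> (nat \<Rightarrow> 'o) \<Rightarrow> (nat \<Rightarrow> 'a) \<Rightarrow> 'o \<Rightarrow> (nat \<Rightarrow> 'a) \<Rightarrow> bool" where
  "is_limit C V E s t D F L lam \<longleftrightarrow> is_cone C V E s t D F L lam \<and>
     (\<forall>L' lam'. is_cone C V E s t D F L' lam' \<longrightarrow>
        (\<exists>!u. u \<in> hom C L' L \<and> (\<forall>v \<in> V. comp C (lam v) u = lam' v)))"

definition has_finite_limits :: "('o, 'a) category \<Rightarrow> bool" where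
  "has_finite_limits C \<longleftrightarrow> (\<forall>V E s t D F. is_finite_diagram C V E s t D F \<longrightarrow>
     (\<exists>L lam. is_limit C V E s t D F L lam))"

definition is_pullback :: "('o, 'a) category \<Rightarrow> 'a \<Rightarrow> 'a \<Rightarrow> 'a \<Rightarrow> 'a \<Rightarrow> bool" where
  "is_pullback C f g p q \<longleftrightarrow>
     f \<in> Ar C \<and> g \<in> Ar C \<and> p \<in> Ar C \<and> q \<in> Ar C \<and>
     cod C f = cod C g \<and> dom C p = dom C q \<and> cod C p = dom C f \<and> cod C q = dom C g \<and>
     comp C f p = comp C g q \<and>
     (\<forall>W \<in> Ob C. \<forall>x \<in> hom C W (dom C f). \<forall>y \<in> hom C W (dom C g).
        comp C f x = comp C g y \<longrightarrow>
        (\<exists>!u. u \<in> hom C W (dom C p) \<and> comp C p u = x \<and> comp C q u = y))"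

definition is_kernel_pair :: "('o, 'a) category \<Rightarrow> 'a \<Rightarrow> 'a \<Rightarrow> 'a \<Rightarrow> bool" where
  "is_kernel_pair C f p q \<longleftrightarrow> is_pullback C f f p q"

definition is_coequalizer :: "('o, 'a) category \<Rightarrow> 'a \<Rightarrow> 'a \<Rightarrow> 'a \<Rightarrow> bool" where
  "is_coequalizer C u v e \<longleftrightarrow>
     u \<in> Ar C \<and> v \<in> Ar C \<and> e \<in> Ar C \<and>
     dom C u = dom C v \<and> cod C u = cod C v \<and> dom C e = cod C u \<and>
     comp C e u = comp C e v \<and>
     (\<forall>Z \<in> Ob C. \<forall>h \<in> hom C (cod C u) Z. comp C h u = comp C h v \<longrightarrow>
        (\<exists>!k. k \<in> hom C (cod C e) Z \<and> comp C k e = h))"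

definition regular_epi :: "('o, 'a) category \<Rightarrow> 'a \<Rightarrow> bool" where
  "regular_epi C e \<longleftrightarrow> (\<exists>u v. is_coequalizer C u v e)"

definition has_coequalizers_of_kernel_pairs :: "('o, 'a) category \<Rightarrow> bool" where
  "has_coequalizers_of_kernel_pairs C \<longleftrightarrow>
     (\<forall>f p q. is_kernel_pair C f p q \<longrightarrow> (\<exists>e. is_coequalizer C p q e))"

definition regular_epis_pullback_stable :: "('o, 'a) category \<Rightarrow> bool" where
  "regular_epis_pullback_stable C \<longleftrightarrow>
     (\<forall>f g p q. is_pullback C f g p q \<longrightarrow> regular_epi C f \<longrightarrow> regular_epi C q)"

definition regular_category :: "('o, 'a) category \<Rightarrow> bool" where
  "regular_category C \<longleftrightarrow> is_category C \<and> has_finite_limits C \<and>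
     has_coequalizers_of_kernel_pairs C \<and> regular_epis_pullback_stable C"

end

theory Submission imports Defs begin

locale regcat =
  fixes C :: "('o,'a) category"
  assumes reg: "regular_category C"
begin

lemma cat: "is_category C" using reg unfolding regular_category_def by simp

lemma ob_dom[simp]: "f \<in> Ar C \<Longrightarrow> dom C f \<in> Ob C"
  using cat unfolding is_category_def by blast
lemma ob_cod[simp]: "f \<in> Ar C \<Longrightarrow> cod C f \<in> Ob C"
  using cat unfolding is_category_def by blast

lemma comp_props:
  assumes "f \<in> Ar C" "g \<in> Ar C" "cod C f = dom C g"
  shows "comp C g f \<in> Ar C \<and> dom C (comp C g f) = dom C f \<and> cod C (comp C g f) = cod C g"
proof -
  have "f \<in> hom C (dom C f) (cod C f)" "g \<in> hom C (cod C f) (cod C g)"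
    using assms by (auto simp: hom_def)
  then have "comp C g f \<in> hom C (dom C f) (cod C g)"
    using cat assms unfolding is_category_def by (meson ob_cod ob_dom)
  then show ?thesis by (simp add: hom_def)
qed

lemma comp_Ar[simp]: "f \<in> Ar C \<Longrightarrow> g \<in> Ar C \<Longrightarrow> cod C f = dom C g \<Longrightarrow> comp C g f \<in> Ar C"
  using comp_props by blast
lemma comp_dom[simp]: "f \<in> Ar C \<Longrightarrow> g \<in> Ar C \<Longrightarrow> cod C f = dom C g \<Longrightarrow> dom C (comp C g f) = dom C f"
  using comp_props by blast
lemma comp_cod[simp]: "f \<in> Ar C \<Longrightarrow> g \<in> Ar C \<Longrightarrow> cod C f = dom C g \<Longrightarrow> cod C (comp C g f) = cod C g"
  using comp_props by blast

lemma assoc[simp]: "f \<in> Ar C \<Longrightarrow> g \<in> Ar C \<Longrightarrow> h \<in> Ar C \<Longrightarrow> cod C f = dom C g \<Longrightarrow> cod C g = dom C h \<Longrightarrow>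
   comp C (comp C h g) f = comp C h (comp C g f)"
  using cat unfolding is_category_def by metis

lemma id_props: "x \<in> Ob C \<Longrightarrow> ident C x \<in> Ar C \<and> dom C (ident C x) = x \<and> cod C (ident C x) = x"
  using cat unfolding is_category_def hom_def by blast

lemma id_l[simp]: "f \<in> Ar C \<Longrightarrow> comp C (ident C (cod C f)) f = f"
  using cat unfolding is_category_def by blast

lemma homD: "f \<in> hom C x y \<Longrightarrow> f \<in> Ar C \<and> dom C f = x \<and> cod C f = y"
  by (simp add: hom_def)

lemma pullback_exists:
  assumes f: "f \<in> hom C X Z" and g: "g \<in> hom C Y Z"
  shows "\<exists>P p q. p \<in> hom C P X \<and> q \<in> hom C P Y \<and> is_pullback C f g p q"
proof -
  define s where "s = (\<lambda>e::nat. if e = 0 then 0 else (1::nat))"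
  define t where "t = (\<lambda>e::nat. (2::nat))"
  define D where "D = (\<lambda>v::nat. if v = 0 then X else if v = 1 then Y else Z)"
  define F where "F = (\<lambda>e::nat. if e = 0 then f else g)"
  have fA: "f \<in> Ar C" "dom C f = X" "cod C f = Z" and gA: "g \<in> Ar C" "dom C g = Y" "cod C g = Z"
    using f g by (auto simp: hom_def)
  have obs: "X \<in> Ob C" "Y \<in> Ob C" "Z \<in> Ob C" using fA gA ob_dom ob_cod by metis+
  have "is_finite_diagram C {0,1,2} {0,1} s t D F"
    using obs f g by (auto simp: is_finite_diagram_def s_def t_def D_def F_def)
  then obtain L lam where lim: "is_limit C {0,1,2} {0,1} s t D F L lam"
    using reg unfolding regular_category_def has_finite_limits_def by blast
  have cone: "L \<in> Ob C" "lam 0 \<in> hom C L X" "lam 1 \<in> hom C L Y" "lam 2 \<in> hom C L Z"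
     "comp C f (lam 0) = lam 2" "comp C g (lam 1) = lam 2"
    using lim unfolding is_limit_def is_cone_def by (auto simp: D_def F_def s_def t_def)
  have univ: "\<And>L' lam'. is_cone C {0,1,2} {0,1} s t D F L' lam' \<Longrightarrow>
        (\<exists>!u. u \<in> hom C L' L \<and> (\<forall>v \<in> {0,1,2}. comp C (lam v) u = lam' v))"
    using lim unfolding is_limit_def by blast
  have "is_pullback C f g (lam 0) (lam 1)"
    unfolding is_pullback_def
  proof (intro conjI ballI impI)
    show "f \<in> Ar C" "g \<in> Ar C" "lam 0 \<in> Ar C" "lam 1 \<in> Ar C" "cod C f = cod C g"
      "dom C (lam 0) = dom C (lam 1)" "cod C (lam 0) = dom C f" "cod C (lam 1) = dom C g"
      using cone fA gA by (auto simp: hom_def)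
    show "comp C f (lam 0) = comp C g (lam 1)" using cone by simp
    fix W x y assume W: "W \<in> Ob C" and x: "x \<in> hom C W (dom C f)" and y: "y \<in> hom C W (dom C g)"
      and eq: "comp C f x = comp C g y"
    define lam' where "lam' = (\<lambda>v::nat. if v = 0 then x else if v = 1 then y else comp C f x)"
    have xA: "x \<in> Ar C" "dom C x = W" "cod C x = X" and yA: "y \<in> Ar C" "dom C y = W" "cod C y = Y"
      using x y fA gA by (auto simp: hom_def)
    have "is_cone C {0,1,2} {0,1} s t D F W lam'"
      unfolding is_cone_def using W xA yA fA gA eq
      by (auto simp: lam'_def D_def F_def s_def t_def hom_def)
    then obtain u where u: "u \<in> hom C W L" "\<forall>v \<in> {0,1,2}. comp C (lam v) u = lam' v"
      and uu: "\<And>u'. u' \<in> hom C W L \<Longrightarrow> (\<forall>v \<in> {0,1,2}. comp C (lam v) u' = lam' v) \<Longrightarrow> u' = u"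
      using univ by metis
    have dl: "dom C (lam 0) = L" using cone by (simp add: hom_def)
    show "\<exists>!u. u \<in> hom C W (dom C (lam 0)) \<and> comp C (lam 0) u = x \<and> comp C (lam 1) u = y"
    proof (rule ex1I[of _ u])
      show "u \<in> hom C W (dom C (lam 0)) \<and> comp C (lam 0) u = x \<and> comp C (lam 1) u = y"
        using u dl by (auto simp: lam'_def)
    next
      fix u' assume h: "u' \<in> hom C W (dom C (lam 0)) \<and> comp C (lam 0) u' = x \<and> comp C (lam 1) u' = y"
      have l0: "lam 0 \<in> Ar C" "cod C (lam 0) = X" using cone by (auto simp: hom_def)
      have "comp C (lam 2) u' = comp C (comp C f (lam 0)) u'" using cone(5) by simp
      also have "\<dots> = comp C f x" using h l0 fA by (simp add: hom_def)
      finally have "comp C (lam 2) u' = comp C f x" .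
      then show "u' = u" using h dl by (intro uu) (auto simp: lam'_def)
    qed
  qed
  then show ?thesis using cone by blast
qed


lemma regepi_Ar: "regular_epi C e \<Longrightarrow> e \<in> Ar C"
  unfolding regular_epi_def is_coequalizer_def by blast

lemma regepi_epi:
  assumes e: "regular_epi C e" and h1: "h1 \<in> Ar C" "dom C h1 = cod C e"
    and h2: "h2 \<in> Ar C" "dom C h2 = cod C e" "cod C h2 = cod C h1"
    and eq: "comp C h1 e = comp C h2 e"
  shows "h1 = h2"
proof -
  obtain u v where co: "is_coequalizer C u v e" using e unfolding regular_epi_def by blast
  have uv: "u \<in> Ar C" "v \<in> Ar C" "e \<in> Ar C" "dom C u = dom C v" "cod C u = cod C v"
    "dom C e = cod C u" "comp C e u = comp C e v"
    and un: "\<forall>Z \<in> Ob C. \<forall>h \<in> hom C (cod C u) Z. comp C h u = comp C h v \<longrightarrow>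
        (\<exists>!k. k \<in> hom C (cod C e) Z \<and> comp C k e = h)"
    using co unfolding is_coequalizer_def by blast+
  have Z: "cod C h1 \<in> Ob C" using h1 by simp
  have hh: "comp C h1 e \<in> hom C (cod C u) (cod C h1)" using uv h1 by (simp add: hom_def)
  have "comp C (comp C h1 e) u = comp C (comp C h1 e) v" using uv h1 by simp
  then have ex: "\<exists>!k. k \<in> hom C (cod C e) (cod C h1) \<and> comp C k e = comp C h1 e"
    using un Z hh by simp
  have "h1 \<in> hom C (cod C e) (cod C h1)" "h2 \<in> hom C (cod C e) (cod C h1)"
    using h1 h2 by (auto simp: hom_def)
  note hs = this
  from ex obtain k where all: "\<forall>y. y \<in> hom C (cod C e) (cod C h1) \<and> comp C y e = comp C h1 e \<longrightarrow> y = k"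
    by (elim ex1E) blast
  have "h1 = k" by (rule all[rule_format, OF conjI[OF hs(1) refl]])
  moreover have "h2 = k" by (rule all[rule_format, OF conjI[OF hs(2) eq[symmetric]]])
  ultimately show ?thesis by simp
qed

lemma pullback_sym: assumes "is_pullback C f g p q" shows "is_pullback C g f q p"
proof -
  have a: "f \<in> Ar C \<and> g \<in> Ar C \<and> p \<in> Ar C \<and> q \<in> Ar C \<and>
     cod C f = cod C g \<and> dom C p = dom C q \<and> cod C p = dom C f \<and> cod C q = dom C g \<and>
     comp C f p = comp C g q"
   and b: "\<forall>W \<in> Ob C. \<forall>x \<in> hom C W (dom C f). \<forall>y \<in> hom C W (dom C g).
        comp C f x = comp C g y \<longrightarrow>
        (\<exists>!u. u \<in> hom C W (dom C p) \<and> comp C p u = x \<and> comp C q u = y)"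
    using assms unfolding is_pullback_def by blast+
  have b': "\<forall>W \<in> Ob C. \<forall>x \<in> hom C W (dom C g). \<forall>y \<in> hom C W (dom C f).
        comp C g x = comp C f y \<longrightarrow>
        (\<exists>!u. u \<in> hom C W (dom C q) \<and> comp C q u = x \<and> comp C p u = y)"
  proof (intro ballI impI)
    fix W x y assume "W \<in> Ob C" "x \<in> hom C W (dom C g)" "y \<in> hom C W (dom C f)" "comp C g x = comp C f y"
    then have "\<exists>!u. u \<in> hom C W (dom C p) \<and> comp C p u = y \<and> comp C q u = x" using b by simp
    then show "\<exists>!u. u \<in> hom C W (dom C q) \<and> comp C q u = x \<and> comp C p u = y" using a by (simp add: conj_commute)
  qed
  show ?thesis unfolding is_pullback_def using a b' by simp
qed

lemma stable: "is_pullback C f g p q \<Longrightarrow> regular_epi C f \<Longrightarrow> regular_epi C q"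
  using reg unfolding regular_category_def regular_epis_pullback_stable_def by blast

lemma id_regepi: assumes "x \<in> Ob C" shows "regular_epi C (ident C x)"
proof -
  have i: "ident C x \<in> Ar C" "dom C (ident C x) = x" "cod C (ident C x) = x" using id_props assms by auto
  have "is_coequalizer C (ident C x) (ident C x) (ident C x)"
    unfolding is_coequalizer_def
  proof (intro conjI ballI impI)
    fix Z h assume "Z \<in> Ob C" "h \<in> hom C (cod C (ident C x)) Z"
    then have h: "h \<in> Ar C" "dom C h = x" "cod C h = Z" using i by (auto simp: hom_def)
    have hi: "comp C h (ident C x) = h" using cat h unfolding is_category_def by metis
    show "\<exists>!k. k \<in> hom C (cod C (ident C x)) Z \<and> comp C k (ident C x) = h"
    proof (rule ex1I[of _ h])
      show "h \<in> hom C (cod C (ident C x)) Z \<and> comp C h (ident C x) = h" using hi h i by (simp add: hom_def)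
    next
      fix k assume k: "k \<in> hom C (cod C (ident C x)) Z \<and> comp C k (ident C x) = h"
      then have "k \<in> Ar C" "dom C k = x" using i by (auto simp: hom_def)
      then have "comp C k (ident C x) = k" using cat unfolding is_category_def by metis
      then show "k = h" using k by simp
    qed
  qed (use i in simp_all)
  then show ?thesis unfolding regular_epi_def by blast
qed


lemma coeq_parts: "is_coequalizer C u v e \<Longrightarrow> u \<in> Ar C \<and> v \<in> Ar C \<and> e \<in> Ar C \<and>
     dom C u = dom C v \<and> cod C u = cod C v \<and> dom C e = cod C u \<and> comp C e u = comp C e v"
  unfolding is_coequalizer_def by (elim conjE) (intro conjI)

lemma coeq_univ:
  assumes co: "is_coequalizer C u v e" and h: "h \<in> Ar C" "dom C h = cod C u" and eq: "comp C h u = comp C h v"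
  shows "\<exists>k. k \<in> Ar C \<and> dom C k = cod C e \<and> cod C k = cod C h \<and> comp C k e = h"
proof -
  have un: "\<forall>Z \<in> Ob C. \<forall>h \<in> hom C (cod C u) Z. comp C h u = comp C h v \<longrightarrow>
        (\<exists>!k. k \<in> hom C (cod C e) Z \<and> comp C k e = h)"
    using co unfolding is_coequalizer_def by (elim conjE)
  have "h \<in> hom C (cod C u) (cod C h)" using h by (simp add: hom_def)
  moreover have "cod C h \<in> Ob C" using h by simp
  ultimately have "\<exists>!k. k \<in> hom C (cod C e) (cod C h) \<and> comp C k e = h" using un eq by simp
  then obtain k where "k \<in> hom C (cod C e) (cod C h) \<and> comp C k e = h" by (elim ex1E) 
  then show ?thesis by (auto simp: hom_def)
qed

lemma pb_parts: "is_pullback C f g p q \<Longrightarrow>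
     f \<in> Ar C \<and> g \<in> Ar C \<and> p \<in> Ar C \<and> q \<in> Ar C \<and>
     cod C f = cod C g \<and> dom C p = dom C q \<and> cod C p = dom C f \<and> cod C q = dom C g \<and>
     comp C f p = comp C g q"
  unfolding is_pullback_def by (elim conjE) (intro conjI)

lemma pb_univ:
  assumes pb: "is_pullback C f g p q" and x: "x \<in> Ar C" "cod C x = dom C f"
    and y: "y \<in> Ar C" "dom C y = dom C x" "cod C y = dom C g" and eq: "comp C f x = comp C g y"
  shows "\<exists>w. w \<in> Ar C \<and> dom C w = dom C x \<and> cod C w = dom C p \<and> comp C p w = x \<and> comp C q w = y"
proof -
  have un: "\<forall>W \<in> Ob C. \<forall>x \<in> hom C W (dom C f). \<forall>y \<in> hom C W (dom C g).
        comp C f x = comp C g y \<longrightarrow>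
        (\<exists>!u. u \<in> hom C W (dom C p) \<and> comp C p u = x \<and> comp C q u = y)"
    using pb unfolding is_pullback_def by (elim conjE)
  have "x \<in> hom C (dom C x) (dom C f)" "y \<in> hom C (dom C x) (dom C g)" "dom C x \<in> Ob C"
    using x y by (simp_all add: hom_def)
  then have "\<exists>!u. u \<in> hom C (dom C x) (dom C p) \<and> comp C p u = x \<and> comp C q u = y"
    using un eq by simp
  then obtain w where "w \<in> hom C (dom C x) (dom C p) \<and> comp C p w = x \<and> comp C q w = y" by (elim ex1E)
  then show ?thesis by (auto simp: hom_def)
qed


lemma pb_ex: "f \<in> Ar C \<Longrightarrow> g \<in> Ar C \<Longrightarrow> cod C f = cod C g \<Longrightarrow> \<exists>p q. is_pullback C f g p q"
  using pullback_exists[of f "dom C f" "cod C f" g "dom C g"] by (auto simp: hom_def)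

lemma comp_regepi:
  assumes h: "regular_epi C h" and g: "regular_epi C g" and hg: "cod C h = dom C g"
  shows "regular_epi C (comp C g h)"
proof -
  define f where "f = comp C g h"
  have hA: "h \<in> Ar C" and gA: "g \<in> Ar C" using h g regepi_Ar by auto
  have fA: "f \<in> Ar C" "dom C f = dom C h" "cod C f = cod C g" using hA gA hg by (simp_all add: f_def)
  obtain p q where pb: "is_pullback C f f p q" using pb_ex[OF fA(1) fA(1)] by blast
  have pq: "p \<in> Ar C" "q \<in> Ar C" "dom C q = dom C p" "cod C p = dom C h" "cod C q = dom C h"
     "comp C f p = comp C f q"
    using pb_parts[OF pb] fA by auto
  have "is_coequalizer C p q f"
    unfolding is_coequalizer_def
  proof (intro conjI ballI impI)
    show "p \<in> Ar C" "q \<in> Ar C" "f \<in> Ar C" "dom C p = dom C q" "cod C p = cod C q" "dom C f = cod C p"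
      "comp C f p = comp C f q" using pq fA by simp_all
    fix W k assume W: "W \<in> Ob C" and k: "k \<in> hom C (cod C p) W" and kpq: "comp C k p = comp C k q"
    have kA: "k \<in> Ar C" "dom C k = dom C h" "cod C k = W" using k pq by (auto simp: hom_def)
    obtain u v where co: "is_coequalizer C u v h" using h unfolding regular_epi_def by blast
    have uv: "u \<in> Ar C" "v \<in> Ar C" "dom C v = dom C u" "cod C u = dom C h" "cod C v = dom C h"
       "comp C h u = comp C h v"
      using coeq_parts[OF co] by auto
    have "comp C f u = comp C f v" using uv hA gA hg by (simp add: f_def)
    then obtain w where w: "w \<in> Ar C" "dom C w = dom C u" "cod C w = dom C p" "comp C p w = u" "comp C q w = v"
      using pb_univ[OF pb, of u v] uv fA by auto
    have "comp C k u = comp C k (comp C p w)" using w by simp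
    also have "\<dots> = comp C (comp C k p) w" using w pq kA by simp
    also have "\<dots> = comp C (comp C k q) w" using kpq by simp
    also have "\<dots> = comp C k (comp C q w)" using w pq kA by simp
    also have "\<dots> = comp C k v" using w by simp
    finally have kuv: "comp C k u = comp C k v" .
    obtain k' where k': "k' \<in> Ar C" "dom C k' = dom C g" "cod C k' = W" "comp C k' h = k"
      using coeq_univ[OF co kA(1) _ kuv] kA uv hg by auto
    \<comment> \<open>k' coequalizes the pair of g\<close>
    obtain u2 v2 where co2: "is_coequalizer C u2 v2 g" using g unfolding regular_epi_def by blast
    have uv2: "u2 \<in> Ar C" "v2 \<in> Ar C" "dom C v2 = dom C u2" "cod C u2 = dom C g" "cod C v2 = dom C g"
       "comp C g u2 = comp C g v2"
      using coeq_parts[OF co2] by auto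
    obtain x1 e1 where pb1: "is_pullback C h u2 x1 e1" using pb_ex[of h u2] hA uv2 hg by auto
    have e1: "x1 \<in> Ar C" "e1 \<in> Ar C" "dom C x1 = dom C e1" "cod C x1 = dom C h" "cod C e1 = dom C u2"
      "comp C h x1 = comp C u2 e1" using pb_parts[OF pb1] by auto
    have e1r: "regular_epi C e1" using stable[OF pb1 h] .
    have ve: "comp C v2 e1 \<in> Ar C" "cod C (comp C v2 e1) = dom C g" "dom C (comp C v2 e1) = dom C e1"
      using e1 uv2 by simp_all
    obtain x2 e2 where pb2: "is_pullback C h (comp C v2 e1) x2 e2"
      using pb_ex[of h "comp C v2 e1"] hA ve hg by auto
    have e2: "x2 \<in> Ar C" "e2 \<in> Ar C" "dom C x2 = dom C e2" "cod C x2 = dom C h" "cod C e2 = dom C e1"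
      "comp C h x2 = comp C (comp C v2 e1) e2" using pb_parts[OF pb2] ve by auto
    have e2r: "regular_epi C e2" using stable[OF pb2 h] .
    have x1e2: "comp C x1 e2 \<in> Ar C" "dom C (comp C x1 e2) = dom C e2" "cod C (comp C x1 e2) = dom C h"
      using e1 e2 by simp_all
    have hx1: "comp C h (comp C x1 e2) = comp C u2 (comp C e1 e2)"
    proof -
      have "comp C h (comp C x1 e2) = comp C (comp C h x1) e2"
        by (rule assoc[symmetric]) (use e1 e2 hA in simp_all)
      also have "\<dots> = comp C (comp C u2 e1) e2" using e1(6) by simp
      also have "\<dots> = comp C u2 (comp C e1 e2)" using e1 e2 uv2 by simp
      finally show ?thesis .
    qed
    have hx2: "comp C h x2 = comp C v2 (comp C e1 e2)" using e2 e1 uv2 by simp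
    have "comp C f (comp C x1 e2) = comp C g (comp C u2 (comp C e1 e2))"
      using hx1 hA gA hg x1e2 by (simp add: f_def)
    also have "\<dots> = comp C (comp C g u2) (comp C e1 e2)" using uv2(1-5) gA e1 e2 by simp
    also have "\<dots> = comp C (comp C g v2) (comp C e1 e2)" using uv2 by simp
    also have "\<dots> = comp C g (comp C h x2)" using uv2(1-5) gA e1 e2 hx2 by simp
    also have "\<dots> = comp C f x2" using hA gA hg e2 by (simp add: f_def)
    finally have fx: "comp C f (comp C x1 e2) = comp C f x2" .
    obtain w2 where w2: "w2 \<in> Ar C" "dom C w2 = dom C e2" "cod C w2 = dom C p"
        "comp C p w2 = comp C x1 e2" "comp C q w2 = x2"
      using pb_univ[OF pb, of "comp C x1 e2" x2] x1e2 e2 fA fx by auto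
    have "comp C k (comp C x1 e2) = comp C k (comp C p w2)" using w2 by simp
    also have "\<dots> = comp C (comp C k p) w2" using w2 pq kA by simp
    also have "\<dots> = comp C (comp C k q) w2" using kpq by simp
    also have "\<dots> = comp C k (comp C q w2)" using w2 pq kA by simp
    also have "\<dots> = comp C k x2" using w2 by simp
    finally have kx: "comp C k (comp C x1 e2) = comp C k x2" .
    have "comp C (comp C k' (comp C u2 e1)) e2 = comp C k' (comp C h (comp C x1 e2))"
      using hx1 k' uv2 e1 e2 by simp
    also have "\<dots> = comp C k (comp C x1 e2)" using k' hA x1e2 hg by (simp flip: k'(4))
    also have "\<dots> = comp C k x2" by (rule kx)
    also have "\<dots> = comp C k' (comp C h x2)" using k' hA e2 hg by (simp flip: k'(4))
    also have "\<dots> = comp C (comp C k' (comp C v2 e1)) e2" using hx2 k' uv2 e1 e2 by simp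
    finally have "comp C (comp C k' (comp C u2 e1)) e2 = comp C (comp C k' (comp C v2 e1)) e2" .
    then have "comp C k' (comp C u2 e1) = comp C k' (comp C v2 e1)"
      by (rule regepi_epi[OF e2r, rotated -1]) (use k' uv2 e1 e2 in simp_all)
    then have "comp C (comp C k' u2) e1 = comp C (comp C k' v2) e1" using k' uv2 e1 by simp
    then have k'uv: "comp C k' u2 = comp C k' v2"
      by (rule regepi_epi[OF e1r, rotated -1]) (use k' uv2 e1 in simp_all)
    obtain k'' where k'': "k'' \<in> Ar C" "dom C k'' = cod C g" "cod C k'' = W" "comp C k'' g = k'"
      using coeq_univ[OF co2 k'(1) _ k'uv] k' uv2 by auto
    show "\<exists>!k0. k0 \<in> hom C (cod C f) W \<and> comp C k0 f = k"
    proof (rule ex1I[of _ k''])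
      show "k'' \<in> hom C (cod C f) W \<and> comp C k'' f = k"
        using k'' k' fA hA gA hg by (simp add: hom_def f_def flip: k''(4) k'(4))
    next
      fix k0 assume k0: "k0 \<in> hom C (cod C f) W \<and> comp C k0 f = k"
      have k0A: "k0 \<in> Ar C" "dom C k0 = cod C g" "cod C k0 = W" using k0 fA by (auto simp: hom_def)
      have "comp C (comp C k0 g) h = comp C (comp C k'' g) h"
        using k0 k0A k'' k' hA gA hg by (simp add: f_def)
      then have "comp C k0 g = comp C k'' g"
        by (rule regepi_epi[OF h, rotated -1]) (use k0A k''(1-3) gA hg in simp_all)
      then show "k0 = k''"
        by (rule regepi_epi[OF g, rotated -1]) (use k0A k'' in simp_all)
    qed
  qed
  then show ?thesis unfolding regular_epi_def f_def by blast
qed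


lemma build:
  fixes m :: nat
  assumes A: "A \<in> Ob C"
    and al: "\<forall>i \<in> {1..n}. \<alpha>' i \<in> hom C (Q' i) A \<and> regular_epi C (\<alpha>' i)"
  shows "m \<le> n \<Longrightarrow> \<exists>Q \<alpha> \<gamma>. Q \<in> Ob C \<and> \<alpha> \<in> Ar C \<and> dom C \<alpha> = Q \<and> cod C \<alpha> = A \<and> regular_epi C \<alpha> \<and>
      (\<forall>i \<in> {1..m}. \<gamma> i \<in> Ar C \<and> dom C (\<gamma> i) = Q \<and> cod C (\<gamma> i) = Q' i \<and> regular_epi C (\<gamma> i) \<and>
          comp C (\<alpha>' i) (\<gamma> i) = \<alpha>)"
proof (induction m)
  case 0
  have "ident C A \<in> Ar C \<and> dom C (ident C A) = A \<and> cod C (ident C A) = A" using id_props A by simp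
  then show ?case using A id_regepi[OF A] by auto
next
  case (Suc m)
  then obtain Q \<alpha> \<gamma> where Q: "Q \<in> Ob C" "\<alpha> \<in> Ar C" "dom C \<alpha> = Q" "cod C \<alpha> = A" "regular_epi C \<alpha>"
    and g: "\<forall>i \<in> {1..m}. \<gamma> i \<in> Ar C \<and> dom C (\<gamma> i) = Q \<and> cod C (\<gamma> i) = Q' i \<and> regular_epi C (\<gamma> i) \<and>
          comp C (\<alpha>' i) (\<gamma> i) = \<alpha>" by auto
  have "Suc m \<in> {1..n}" using Suc.prems by simp
  then have a0: "\<alpha>' (Suc m) \<in> Ar C" "dom C (\<alpha>' (Suc m)) = Q' (Suc m)" "cod C (\<alpha>' (Suc m)) = A"
     "regular_epi C (\<alpha>' (Suc m))"
    using al by (auto simp: hom_def)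
  obtain \<delta> \<pi> where pb: "is_pullback C (\<alpha>' (Suc m)) \<alpha> \<delta> \<pi>" using pb_ex[of "\<alpha>' (Suc m)" \<alpha>] a0 Q by auto
  have dp: "\<delta> \<in> Ar C" "\<pi> \<in> Ar C" "dom C \<delta> = dom C \<pi>" "cod C \<delta> = Q' (Suc m)" "cod C \<pi> = Q"
    "comp C (\<alpha>' (Suc m)) \<delta> = comp C \<alpha> \<pi>" using pb_parts[OF pb] a0 Q by auto
  have \<pi>r: "regular_epi C \<pi>" using stable[OF pb a0(4)] .
  have \<delta>r: "regular_epi C \<delta>" using stable[OF pullback_sym[OF pb] Q(5)] .
  define \<gamma>' where "\<gamma>' = (\<lambda>i. if i = Suc m then \<delta> else comp C (\<gamma> i) \<pi>)"
  show ?case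
  proof (intro exI conjI ballI)
    show "dom C \<pi> \<in> Ob C" using dp by simp
    show "comp C \<alpha> \<pi> \<in> Ar C" "dom C (comp C \<alpha> \<pi>) = dom C \<pi>" "cod C (comp C \<alpha> \<pi>) = A"
      using dp Q by simp_all
    show "regular_epi C (comp C \<alpha> \<pi>)" using comp_regepi[OF \<pi>r Q(5)] dp Q by simp
    fix i assume i: "i \<in> {1..Suc m}"
    show "\<gamma>' i \<in> Ar C" "dom C (\<gamma>' i) = dom C \<pi>" "cod C (\<gamma>' i) = Q' i"
      "comp C (\<alpha>' i) (\<gamma>' i) = comp C \<alpha> \<pi>"
    proof -
      have "(\<gamma>' i \<in> Ar C \<and> dom C (\<gamma>' i) = dom C \<pi> \<and> cod C (\<gamma>' i) = Q' i \<and>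
        comp C (\<alpha>' i) (\<gamma>' i) = comp C \<alpha> \<pi>) \<and> regular_epi C (\<gamma>' i)"
      proof (cases "i = Suc m")
        case True then show ?thesis using dp \<delta>r by (simp add: \<gamma>'_def)
      next
        case False
        then have im: "i \<in> {1..m}" and "i \<in> {1..n}" using i Suc.prems by auto
        then have ai: "\<alpha>' i \<in> Ar C" "dom C (\<alpha>' i) = Q' i" "cod C (\<alpha>' i) = A"
          using al by (auto simp: hom_def)
        have gi: "\<gamma> i \<in> Ar C" "dom C (\<gamma> i) = Q" "cod C (\<gamma> i) = Q' i" "regular_epi C (\<gamma> i)"
          "comp C (\<alpha>' i) (\<gamma> i) = \<alpha>" using g im by auto
        have "regular_epi C (comp C (\<gamma> i) \<pi>)" using comp_regepi[OF \<pi>r gi(4)] dp gi by simp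
        moreover have "comp C (\<alpha>' i) (comp C (\<gamma> i) \<pi>) = comp C \<alpha> \<pi>"
        proof -
          have "comp C (\<alpha>' i) (comp C (\<gamma> i) \<pi>) = comp C (comp C (\<alpha>' i) (\<gamma> i)) \<pi>"
            by (rule assoc[symmetric]) (use gi(1-3) ai dp in simp_all)
          then show ?thesis using gi(5) by simp
        qed
        ultimately show ?thesis using False gi dp by (simp add: \<gamma>'_def)
      qed
      then show "\<gamma>' i \<in> Ar C" "dom C (\<gamma>' i) = dom C \<pi>" "cod C (\<gamma>' i) = Q' i"
        "comp C (\<alpha>' i) (\<gamma>' i) = comp C \<alpha> \<pi>" by simp_all
    qed
    show "regular_epi C (\<gamma>' i)"
    proof (cases "i = Suc m")
      case True then show ?thesis using \<delta>r by (simp add: \<gamma>'_def)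
    next
      case False
      then have im: "i \<in> {1..m}" using i by auto
      have gi: "\<gamma> i \<in> Ar C" "dom C (\<gamma> i) = Q" "regular_epi C (\<gamma> i)" using g im by auto
      show ?thesis using comp_regepi[OF \<pi>r gi(3)] dp gi False by (simp add: \<gamma>'_def)
    qed
  qed
qed

end

theorem lemma5p4:
  fixes C :: "('o, 'a) category"
    and n :: nat and A B :: 'o
    and Q' Cs :: "nat \<Rightarrow> 'o"
    and \<alpha>' \<beta>' a b :: "nat \<Rightarrow> 'a"
  assumes "regular_category C"
    and "n \<ge> 1"
    and "A \<in> Ob C" and "B \<in> Ob C"
    and "\<forall>i \<in> {1..n}. Q' i \<in> Ob C \<and> Cs i \<in> Ob C"
    and "\<forall>i \<in> {1..n}. \<alpha>' i \<in> hom C (Q' i) A \<and> regular_epi C (\<alpha>' i)"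
    and "\<forall>i \<in> {1..n}. \<beta>' i \<in> hom C (Q' i) B \<and> regular_epi C (\<beta>' i)"
    and "\<forall>i \<in> {1..n}. a i \<in> hom C A (Cs i) \<and> b i \<in> hom C B (Cs i)"
    and "\<forall>i \<in> {1..n}. comp C (b i) (\<beta>' i) = comp C (a i) (\<alpha>' i)"
  shows "\<exists>Q \<alpha> \<beta>. Q \<in> Ob C \<and> \<alpha> \<in> hom C Q A \<and> regular_epi C \<alpha> \<and>
           (\<forall>i \<in> {1..n}. \<beta> i \<in> hom C Q B \<and> regular_epi C (\<beta> i) \<and>
              comp C (b i) (\<beta> i) = comp C (a i) \<alpha>)"
proof -
  interpret regcat C by unfold_locales (rule assms(1))
  obtain Q \<alpha> \<gamma> where Q: "Q \<in> Ob C" "\<alpha> \<in> Ar C" "dom C \<alpha> = Q" "cod C \<alpha> = A" "regular_epi C \<alpha>"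
    and g: "\<forall>i \<in> {1..n}. \<gamma> i \<in> Ar C \<and> dom C (\<gamma> i) = Q \<and> cod C (\<gamma> i) = Q' i \<and> regular_epi C (\<gamma> i) \<and>
          comp C (\<alpha>' i) (\<gamma> i) = \<alpha>"
    using build[OF assms(3) assms(6), where m=n] by auto
  show ?thesis
  proof (intro exI conjI ballI)
    show "Q \<in> Ob C" "\<alpha> \<in> hom C Q A" "regular_epi C \<alpha>" using Q by (simp_all add: hom_def)
    fix i assume i: "i \<in> {1..n}"
    have gi: "\<gamma> i \<in> Ar C" "dom C (\<gamma> i) = Q" "cod C (\<gamma> i) = Q' i" "regular_epi C (\<gamma> i)"
          "comp C (\<alpha>' i) (\<gamma> i) = \<alpha>" using g i by auto
    have ai: "\<alpha>' i \<in> Ar C" "dom C (\<alpha>' i) = Q' i" "cod C (\<alpha>' i) = A"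
      using assms(6) i by (auto simp: hom_def)
    have bi: "\<beta>' i \<in> Ar C" "dom C (\<beta>' i) = Q' i" "cod C (\<beta>' i) = B" "regular_epi C (\<beta>' i)"
      using assms(7) i by (auto simp: hom_def)
    have ab: "a i \<in> Ar C" "dom C (a i) = A" "cod C (a i) = Cs i" "b i \<in> Ar C" "dom C (b i) = B" "cod C (b i) = Cs i"
      using assms(8) i by (auto simp: hom_def)
    have eq: "comp C (b i) (\<beta>' i) = comp C (a i) (\<alpha>' i)" using assms(9) i by auto
    show "comp C (\<beta>' i) (\<gamma> i) \<in> hom C Q B" using gi bi by (simp add: hom_def)
    show "regular_epi C (comp C (\<beta>' i) (\<gamma> i))" using comp_regepi[OF gi(4) bi(4)] gi bi by simp
    have "comp C (b i) (comp C (\<beta>' i) (\<gamma> i)) = comp C (comp C (b i) (\<beta>' i)) (\<gamma> i)"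
      by (rule assoc[symmetric]) (use gi(1-3) bi(1-3) ab in simp_all)
    also have "\<dots> = comp C (comp C (a i) (\<alpha>' i)) (\<gamma> i)" using eq by simp
    also have "\<dots> = comp C (a i) (comp C (\<alpha>' i) (\<gamma> i))"
      by (rule assoc) (use gi(1-3) ai ab in simp_all)
    also have "\<dots> = comp C (a i) \<alpha>" using gi(5) by simp
    finally show "comp C (b i) (comp C (\<beta>' i) (\<gamma> i)) = comp C (a i) \<alpha>" .
  qed
qed

end
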